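(* Let $X_1,\dots,X_n$ be i.i.d. copies of $X$ and $Y_1,\dots,Y_m$ be i.i.d. copies of $Y$. Let $\tau_{k|n}(\mathbf X)$ denote the lifetime of the $k$-out-of-$n$ system with component lifetimes $X_1,\dots,X_n$ and $\tau_{l|m}(\mathbf Y)$ the lifetime of the $l$-out-of-$m$ system with component lifetimes $Y_1,\dots,Y_m$. If $X\underset{c}{\prec}Y$ and $Y\le_{rhr}X$, then $\tau_{k|n}(\mathbf X)\underset{c}{\prec}\tau_{l|m}(\mathbf Y)$ for all $1\le k\le n$, $1\le l\le m$ with $k\le l$ and $m-l\le n-k$.
   Context: All random variables are non-negative and absolutely continuous with support $[0,\infty)$. For a random variable $W$: density $f_W$, cdf $F_W$, survival $\bar F_W=1-F_W$, hazard rate $r_W=f_W/\bar F_W$. $X\le_{rhr}Y$ means $F_Y(x)/F_X(x)$ is increasing in $x$. $X\underset{c}{\prec}Y$ means $r_X(x)/r_Y(x)$ is increasing in $x\ge0$. A $k$-out-of-$n$ system functions as long as at least $k$ of its $n$ components function. "Increasing" means non-decreasing. *)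

theory Defs
  imports "HOL-Probability.Probability"
begin

definition rv_cdf :: "'a measure \<Rightarrow> ('a \<Rightarrow> real) \<Rightarrow> real \<Rightarrow> real" where
  "rv_cdf M Z x = measure M {\<omega> \<in> space M. Z \<omega> \<le> x}"

definition hazard_rate :: "'a measure \<Rightarrow> ('a \<Rightarrow> real) \<Rightarrow> (real \<Rightarrow> real) \<Rightarrow> real \<Rightarrow> real" where
  "hazard_rate M Z f x = f x / (1 - rv_cdf M Z x)"

text \<open>Standing assumption: Z is non-negative, absolutely continuous with density f,
  and has support [0,infinity) (cdf strictly increasing on [0,infinity)).\<close>
definition nonneg_ac_rv :: "'a measure \<Rightarrow> ('a \<Rightarrow> real) \<Rightarrow> (real \<Rightarrow> real) \<Rightarrow> bool" where
  "nonneg_ac_rv M Z f \<longleftrightarrow>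
     distributed M lborel Z (\<lambda>x. ennreal (f x)) \<and> (\<forall>x. 0 \<le> f x) \<and>
     (AE \<omega> in M. 0 \<le> Z \<omega>) \<and> strict_mono_on {0..} (rv_cdf M Z)"

definition c_order :: "'a measure \<Rightarrow> ('a \<Rightarrow> real) \<Rightarrow> (real \<Rightarrow> real) \<Rightarrow>
    'b measure \<Rightarrow> ('b \<Rightarrow> real) \<Rightarrow> (real \<Rightarrow> real) \<Rightarrow> bool" where
  "c_order M X fX N Y fY \<longleftrightarrow>
     mono_on {0..} (\<lambda>x. hazard_rate M X fX x / hazard_rate N Y fY x)"

definition rhr_le :: "'a measure \<Rightarrow> ('a \<Rightarrow> real) \<Rightarrow> 'b measure \<Rightarrow> ('b \<Rightarrow> real) \<Rightarrow> bool" where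
  "rhr_le M X N Y \<longleftrightarrow> mono_on {0<..} (\<lambda>x. rv_cdf N Y x / rv_cdf M X x)"

text \<open>Lifetime of the k-out-of-n system with component lifetimes X 0, ..., X (n-1):
  the system functions at time t iff at least k components function (X i > t).\<close>
definition kofn_lifetime :: "nat \<Rightarrow> nat \<Rightarrow> (nat \<Rightarrow> 'a \<Rightarrow> real) \<Rightarrow> 'a \<Rightarrow> real" where
  "kofn_lifetime k n X \<omega> = Sup {t. k \<le> card {i. i < n \<and> t < X i \<omega>}}"

end

theory Submission
  imports Defs
begin

definition Kp :: "nat \<Rightarrow> nat \<Rightarrow> real \<Rightarrow> real" where
  "Kp k s u = (\<Sum>i\<le>s. real ((k - 1 + i) choose i) * u ^ i)"

definition dphi :: "nat \<Rightarrow> nat \<Rightarrow> real \<Rightarrow> real" where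
  "dphi k s u = real (k + s) * real ((k - 1 + s) choose s) * (1 - u) ^ (k - 1) * u ^ s"

lemma binom_step: "k \<ge> 1 \<Longrightarrow> real (Suc s) * real ((k + s) choose Suc s) = real (k + s) * real ((k - 1 + s) choose s)"
proof -
  assume k: "k \<ge> 1"
  have "Suc s * (Suc (k - 1 + s) choose Suc s) = Suc (k - 1 + s) * ((k - 1 + s) choose s)"
    by (rule Suc_times_binomial)
  moreover have "Suc (k - 1 + s) = k + s" using k by simp
  ultimately have "Suc s * ((k + s) choose Suc s) = (k + s) * ((k - 1 + s) choose s)" by simp
  then show ?thesis by (metis of_nat_mult)
qed

lemma Kp_Suc: "k \<ge> 1 \<Longrightarrow> Kp k (Suc s) u = Kp k s u + real ((k + s) choose Suc s) * u ^ Suc s"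
  by (cases k) (auto simp: Kp_def)

lemma deriv_surv:
  assumes k: "k \<ge> 1"
  shows "((\<lambda>u. (1 - u) ^ k * Kp k s u) has_real_derivative (- dphi k s u)) (at u)"
proof (induction s)
  case 0
  have "((\<lambda>u. (1 - u) ^ k) has_real_derivative (real k * (1 - u) ^ (k - 1) * (-1))) (at u)"
    by (auto intro!: derivative_eq_intros)
  then show ?case using k by (simp add: Kp_def dphi_def)
next
  case (Suc s)
  let ?c = "real ((k + s) choose Suc s)"
  have e: "(\<lambda>u. (1 - u) ^ k * Kp k (Suc s) u) = (\<lambda>u. (1 - u) ^ k * Kp k s u + ?c * ((1 - u) ^ k * u ^ Suc s))"
    using k by (auto simp: Kp_Suc algebra_simps)
  have d2: "((\<lambda>u. ?c * ((1 - u) ^ k * u ^ Suc s)) has_real_derivative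
      ?c * (real k * (1 - u) ^ (k - 1) * (-1) * u ^ Suc s + (1 - u) ^ k * (real (Suc s) * u ^ s))) (at u)"
    by (auto intro!: derivative_eq_intros) (cases s; simp add: algebra_simps)
  have "- dphi k s u + ?c * (real k * (1 - u) ^ (k - 1) * (-1) * u ^ Suc s + (1 - u) ^ k * (real (Suc s) * u ^ s))
        = - dphi k (Suc s) u"
  proof -
    have bs: "real (Suc s) * ?c = real (k + s) * real ((k - 1 + s) choose s)" using binom_step[OF k] .
    have pk: "(1 - u) ^ k = (1 - u) ^ (k - 1) * (1 - u)" using k
      by (metis Suc_diff_le diff_Suc_1 power_Suc2)
    have kk: "k - 1 + Suc s = k + s" using k by simp
    have "- dphi k s u + ?c * (real k * (1 - u) ^ (k - 1) * (-1) * u ^ Suc s + (1 - u) ^ k * (real (Suc s) * u ^ s))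
       = (1 - u) ^ (k - 1) * u ^ s * (- (real (k + s) * real ((k - 1 + s) choose s)) - ?c * real k * u
           + (real (Suc s) * ?c) * (1 - u))"
      unfolding dphi_def pk by (simp add: algebra_simps)
    also have "\<dots> = (1 - u) ^ (k - 1) * u ^ s * (- (real (k + s) * real ((k - 1 + s) choose s)) * u - ?c * real k * u)"
      unfolding bs by (simp add: algebra_simps)
    also have "\<dots> = - ((1 - u) ^ (k - 1) * u ^ Suc s * (real (Suc s) * ?c + ?c * real k))"
      unfolding bs by (simp add: algebra_simps)
    also have "\<dots> = - dphi k (Suc s) u"
      unfolding dphi_def kk using k by (simp add: algebra_simps)
    finally show ?thesis .
  qed
  then show ?case unfolding e using DERIV_add[OF Suc.IH d2] by simp
qed

lemma pow_cross:
  fixes u u' :: real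
  assumes "0 \<le> u" "u \<le> u'" "i \<le> j"
  shows "u ^ j * u' ^ i \<le> u' ^ j * u ^ i"
proof -
  have j: "j = i + (j - i)" using assms by simp
  have "u ^ j * u' ^ i = u ^ (j - i) * (u ^ i * u' ^ i)"
    by (subst j, simp add: power_add algebra_simps)
  also have "\<dots> \<le> u' ^ (j - i) * (u ^ i * u' ^ i)"
    using assms by (intro mult_right_mono power_mono) auto
  also have "\<dots> = u' ^ j * u ^ i"
    by (subst (2) j, simp add: power_add algebra_simps)
  finally show ?thesis .
qed

lemma cross_sum:
  fixes a b :: "nat \<Rightarrow> real" and u u' :: real
  assumes u: "0 \<le> u" "u \<le> u'"
    and ab: "\<And>i j. i \<le> j \<Longrightarrow> a i * b j \<le> a j * b i"
  shows "(\<Sum>j\<le>N. a j * u ^ j) * (\<Sum>i\<le>N. b i * u' ^ i) \<le> (\<Sum>j\<le>N. a j * u' ^ j) * (\<Sum>i\<le>N. b i * u ^ i)"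
proof -
  define T where "T i j = a j * b i * (u' ^ j * u ^ i - u ^ j * u' ^ i)" for i j
  have D: "(\<Sum>j\<le>N. a j * u' ^ j) * (\<Sum>i\<le>N. b i * u ^ i) - (\<Sum>j\<le>N. a j * u ^ j) * (\<Sum>i\<le>N. b i * u' ^ i)
        = (\<Sum>i\<le>N. \<Sum>j\<le>N. T i j)"
  proof -
    have "(\<Sum>j\<le>N. a j * u' ^ j) * (\<Sum>i\<le>N. b i * u ^ i) - (\<Sum>j\<le>N. a j * u ^ j) * (\<Sum>i\<le>N. b i * u' ^ i)
      = (\<Sum>i\<le>N. b i * u ^ i) * (\<Sum>j\<le>N. a j * u' ^ j) - (\<Sum>i\<le>N. b i * u' ^ i) * (\<Sum>j\<le>N. a j * u ^ j)"
      by simp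
    also have "\<dots> = (\<Sum>i\<le>N. \<Sum>j\<le>N. b i * u ^ i * (a j * u' ^ j) - b i * u' ^ i * (a j * u ^ j))"
      unfolding sum_product by (simp add: sum_subtractf)
    also have "\<dots> = (\<Sum>i\<le>N. \<Sum>j\<le>N. T i j)"
      unfolding T_def by (intro sum.cong refl) (simp add: algebra_simps)
    finally show ?thesis .
  qed
  have sw: "(\<Sum>i\<le>N. \<Sum>j\<le>N. T i j) = (\<Sum>i\<le>N. \<Sum>j\<le>N. T j i)"
    by (rule sum.swap)
  have pos: "0 \<le> T i j + T j i" for i j
  proof -
    have e: "T i j + T j i = (a j * b i - a i * b j) * (u' ^ j * u ^ i - u ^ j * u' ^ i)"
      unfolding T_def by (simp add: algebra_simps)
    show ?thesis
    proof (cases "i \<le> j")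
      case True
      then show ?thesis unfolding e using ab[OF True] pow_cross[OF u True]
        by (intro mult_nonneg_nonneg) auto
    next
      case False
      then have ji: "j \<le> i" by simp
      then show ?thesis unfolding e using ab[OF ji] pow_cross[OF u ji]
        by (intro mult_nonpos_nonpos) (auto simp: mult.commute)
    qed
  qed
  have "0 \<le> (\<Sum>i\<le>N. \<Sum>j\<le>N. T i j + T j i)"
    by (intro sum_nonneg pos)
  also have "\<dots> = 2 * (\<Sum>i\<le>N. \<Sum>j\<le>N. T i j)"
    by (simp add: sum.distrib sw[symmetric])
  finally show ?thesis using D by linarith
qed

lemma chain_ratio:
  fixes a b :: "nat \<Rightarrow> real"
  assumes b: "\<And>j. 0 < b j" and cons: "\<And>j. a j * b (Suc j) \<le> a (Suc j) * b j"
  shows "i \<le> j \<Longrightarrow> a i * b j \<le> a j * b i"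
proof (induction j)
  case 0 then show ?case by simp
next
  case (Suc j)
  show ?case
  proof (cases "i = Suc j")
    case True then show ?thesis by simp
  next
    case False
    then have ij: "i \<le> j" using Suc.prems by simp
    have "a i * b j * b (Suc j) \<le> a j * b i * b (Suc j)"
      using Suc.IH[OF ij] b[of "Suc j"] by (intro mult_right_mono) (auto simp: less_imp_le)
    also have "\<dots> = (a j * b (Suc j)) * b i" by simp
    also have "\<dots> \<le> (a (Suc j) * b j) * b i"
      using cons[of j] b[of i] by (intro mult_right_mono) (auto simp: less_imp_le)
    finally have "b j * (a i * b (Suc j)) \<le> b j * (a (Suc j) * b i)" by (simp add: algebra_simps)
    then show ?thesis using b[of j] by simp
  qed
qed

lemma Kp_ge1: "0 \<le> u \<Longrightarrow> 1 \<le> Kp k s u"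
proof -
  assume u: "0 \<le> u"
  have "Kp k s u = (\<Sum>i\<in>insert 0 {1..s}. real ((k - 1 + i) choose i) * u ^ i)"
    unfolding Kp_def by (rule sum.cong) auto
  also have "\<dots> = 1 + (\<Sum>i\<in>{1..s}. real ((k - 1 + i) choose i) * u ^ i)"
    by (subst sum.insert) auto
  also have "\<dots> \<ge> 1" using u by (intro add_increasing2 sum_nonneg) auto
  finally show ?thesis .
qed

lemma Kp_pos: "0 \<le> u \<Longrightarrow> 0 < Kp k s u"
  using Kp_ge1[of u k s] by linarith

lemma P1:
  assumes "0 < a" "a \<le> b"
  shows "a ^ s * Kp k s b \<le> b ^ s * Kp k s a"
  unfolding Kp_def sum_distrib_left
proof (rule sum_mono)
  fix i assume "i \<in> {..s}"
  then have i: "i \<le> s" by simp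
  have "a ^ s * b ^ i = a ^ (s - i) * (a ^ i * b ^ i)"
    using i by (simp add: power_add[symmetric] algebra_simps)
  also have "\<dots> \<le> b ^ (s - i) * (a ^ i * b ^ i)"
    using assms by (intro mult_right_mono power_mono) auto
  also have "\<dots> = b ^ s * a ^ i"
    using i by (simp add: algebra_simps) (metis le_add_diff_inverse2 power_add mult.commute)
  finally have "a ^ s * b ^ i \<le> b ^ s * a ^ i" .
  then show "a ^ s * (real ((k - 1 + i) choose i) * b ^ i) \<le> b ^ s * (real ((k - 1 + i) choose i) * a ^ i)"
    by (metis (no_types, lifting) mult.left_commute mult_left_mono of_nat_0_le_iff)
qed

lemma P2:
  assumes u: "0 \<le> u" "u \<le> u'" and r: "0 \<le> \<rho>" "\<rho> \<le> 1"
  shows "Kp k s u * Kp k s (\<rho> * u') \<le> Kp k s u' * Kp k s (\<rho> * u)"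
proof -
  have e: "Kp k s (\<rho> * v) = (\<Sum>i\<le>s. (real ((k - 1 + i) choose i) * \<rho> ^ i) * v ^ i)" for v
    unfolding Kp_def by (simp add: power_mult_distrib algebra_simps)
  show ?thesis unfolding e
    unfolding Kp_def
  proof (rule cross_sum[OF u])
    fix i j :: nat assume "i \<le> j"
    then have "\<rho> ^ j \<le> \<rho> ^ i" using r by (simp add: power_decreasing)
    then show "real ((k - 1 + i) choose i) * (real ((k - 1 + j) choose j) * \<rho> ^ j)
       \<le> real ((k - 1 + j) choose j) * (real ((k - 1 + i) choose i) * \<rho> ^ i)"
      by (metis (no_types, lifting) mult.left_commute mult_left_mono of_nat_0_le_iff)
  qed
qed

definition aa :: "nat \<Rightarrow> nat \<Rightarrow> nat \<Rightarrow> real" where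
  "aa d l j = (if d \<le> j then real ((l - 1 + (j - d)) choose (j - d)) else 0)"

lemma aa_repr: "u ^ d * Kp l t u = (\<Sum>j\<le>t + d. aa d l j * u ^ j)"
proof -
  have "(\<Sum>j\<le>t + d. aa d l j * u ^ j) = (\<Sum>j\<in>{..<d} \<union> {d..t + d}. aa d l j * u ^ j)"
    by (intro sum.cong) auto
  also have "\<dots> = (\<Sum>j\<in>{..<d}. aa d l j * u ^ j) + (\<Sum>j\<in>{d..t + d}. aa d l j * u ^ j)"
    by (intro sum.union_disjoint) auto
  also have "(\<Sum>j\<in>{..<d}. aa d l j * u ^ j) = 0" by (simp add: aa_def)
  also have "(\<Sum>j\<in>{d..t + d}. aa d l j * u ^ j) = (\<Sum>j\<in>{0 + d..t + d}. aa d l j * u ^ j)" by simp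
  also have "\<dots> = (\<Sum>i\<in>{0..t}. aa d l (i + d) * u ^ (i + d))"
    by (rule sum.shift_bounds_cl_nat_ivl)
  also have "\<dots> = (\<Sum>i\<le>t. real ((l - 1 + i) choose i) * u ^ i * u ^ d)"
    by (intro sum.cong) (auto simp: aa_def power_add atLeast0AtMost)
  finally show ?thesis unfolding Kp_def sum_distrib_left by (simp add: algebra_simps)
qed

lemma cons_aa:
  assumes k: "1 \<le> k" "k \<le> l"
  shows "aa d l j * real ((k - 1 + Suc j) choose Suc j) \<le> aa d l (Suc j) * real ((k - 1 + j) choose j)"
proof (cases "d \<le> j")
  case False
  then show ?thesis by (auto simp: aa_def)
next
  case True
  define p where "p = j - d"
  have j: "j = p + d" using True p_def by simp
  have sj: "Suc j - d = Suc p" using True p_def by simp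
  have l1: "l - 1 + Suc p = l + p" using k by simp
  have k1: "k - 1 + Suc j = k + j" using k by simp
  have bl: "real (Suc p) * real ((l + p) choose Suc p) = real (l + p) * real ((l - 1 + p) choose p)"
    using binom_step[of l p] k by simp
  have bk: "real (Suc j) * real ((k + j) choose Suc j) = real (k + j) * real ((k - 1 + j) choose j)"
    using binom_step[of k j] k by simp
  define A where "A = real ((l - 1 + p) choose p)"
  define B where "B = real ((k - 1 + j) choose j)"
  define A' where "A' = real ((l + p) choose Suc p)"
  define B' where "B' = real ((k + j) choose Suc j)"
  have A0: "0 \<le> A" "0 \<le> B" unfolding A_def B_def by auto
  have key: "real (k + j) * real (Suc p) \<le> real (l + p) * real (Suc j)"
  proof -
    have "real (l + p) * real (Suc j) - real (k + j) * real (Suc p)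
          = (real l - real k) * (real p + 1) + real d * (real l - 1)"
      unfolding j by (simp add: algebra_simps)
    moreover have "0 \<le> (real l - real k) * (real p + 1) + real d * (real l - 1)"
      using k by (intro add_nonneg_nonneg mult_nonneg_nonneg) auto
    ultimately show ?thesis by linarith
  qed
  have "(A * B') * (real (Suc p) * real (Suc j)) = A * real (Suc p) * (real (Suc j) * B')"
    by (simp add: algebra_simps)
  also have "\<dots> = A * real (Suc p) * (real (k + j) * B)"
    using bk unfolding B'_def B_def by simp
  also have "\<dots> = A * B * (real (k + j) * real (Suc p))"
    by (simp add: algebra_simps)
  also have "\<dots> \<le> A * B * (real (l + p) * real (Suc j))"
    using key A0 by (intro mult_left_mono) auto
  also have "\<dots> = B * real (Suc j) * (real (l + p) * A)"
    by (simp add: algebra_simps)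
  also have "\<dots> = B * real (Suc j) * (real (Suc p) * A')"
    using bl unfolding A'_def A_def by simp
  also have "\<dots> = (A' * B) * (real (Suc p) * real (Suc j))"
    by (simp add: algebra_simps)
  finally have "A * B' \<le> A' * B"
    by (rule mult_right_le_imp_le) auto
  moreover have "aa d l j = A" unfolding aa_def A_def p_def using True by simp
  moreover have "aa d l (Suc j) = A'"
  proof -
    have dj: "d \<le> Suc j" using True by simp
    have e1: "l - 1 + (Suc j - d) = l + p" using k True p_def by simp
    show ?thesis by (simp only: aa_def if_P[OF dj] sj l1 A'_def)
  qed
  moreover have "real ((k - 1 + Suc j) choose Suc j) = B'" unfolding B'_def using k1 by simp
  ultimately show ?thesis unfolding B_def by simp
qed

lemma P3:
  assumes k: "1 \<le> k" "k \<le> l" and u: "0 \<le> u" "u \<le> u'"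
  shows "u ^ d * Kp l t u * Kp k (t + d) u' \<le> u' ^ d * Kp l t u' * Kp k (t + d) u"
proof -
  have ch: "i \<le> j \<Longrightarrow> aa d l i * real ((k - 1 + j) choose j) \<le> aa d l j * real ((k - 1 + i) choose i)" for i j
    by (rule chain_ratio[where b = "\<lambda>j. real ((k - 1 + j) choose j)"]) (use cons_aa[OF k] in auto)
  show ?thesis
    unfolding aa_repr Kp_def[of k]
    by (rule cross_sum[OF u]) (rule ch)
qed

definition Wf :: "nat \<Rightarrow> nat \<Rightarrow> nat \<Rightarrow> nat \<Rightarrow> real \<Rightarrow> real \<Rightarrow> real" where
  "Wf k s l t uX uY = uX ^ s * Kp l t uY / (uY ^ t * Kp k s uX)"

lemma W_step1:
  assumes k: "1 \<le> k" "k \<le> l" and ts: "t \<le> s" and u: "0 < u" "u \<le> u'" and r: "0 < \<rho>" "\<rho> \<le> 1"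
  shows "Wf k s l t (\<rho> * u) u \<le> Wf k s l t (\<rho> * u') u'"
proof -
  define d where "d = s - t"
  have s: "s = t + d" using ts d_def by simp
  have e: "Wf k s l t (\<rho> * v) v = \<rho> ^ s * (v ^ d * Kp l t v / Kp k s (\<rho> * v))" if "0 < v" for v
  proof -
    have "v ^ s = v ^ t * v ^ d" unfolding s by (simp add: power_add)
    then show ?thesis unfolding Wf_def using that by (simp add: power_mult_distrib field_simps)
  qed
  have u': "0 < u'" using u by simp
  have K: "0 < Kp k s u" "0 < Kp k s u'" "0 < Kp k s (\<rho> * u)" "0 < Kp k s (\<rho> * u')"
    using u r by (auto intro!: Kp_pos)
  have A: "u ^ d * Kp l t u * Kp k s u' \<le> u' ^ d * Kp l t u' * Kp k s u"
    unfolding s by (rule P3[OF k]) (use u in auto)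
  have B: "Kp k s u * Kp k s (\<rho> * u') \<le> Kp k s u' * Kp k s (\<rho> * u)"
    by (rule P2) (use u r in auto)
  have nn: "0 \<le> u ^ d * Kp l t u" "0 \<le> u' ^ d * Kp l t u'" using u K Kp_pos[of u l t] Kp_pos[of u' l t] by auto
  have "(u ^ d * Kp l t u * Kp k s u') * (Kp k s u * Kp k s (\<rho> * u'))
      \<le> (u' ^ d * Kp l t u' * Kp k s u) * (Kp k s u' * Kp k s (\<rho> * u))"
    by (rule mult_mono[OF A B]) (use nn K in auto)
  then have "(Kp k s u * Kp k s u') * (u ^ d * Kp l t u * Kp k s (\<rho> * u'))
      \<le> (Kp k s u * Kp k s u') * (u' ^ d * Kp l t u' * Kp k s (\<rho> * u))"
    by (simp add: algebra_simps)
  then have C: "u ^ d * Kp l t u * Kp k s (\<rho> * u') \<le> u' ^ d * Kp l t u' * Kp k s (\<rho> * u)"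
    using K by (simp add: mult_le_cancel_left_pos)
  have "u ^ d * Kp l t u / Kp k s (\<rho> * u) \<le> u' ^ d * Kp l t u' / Kp k s (\<rho> * u')"
    using C K by (simp add: divide_simps)
  then show ?thesis unfolding e[OF u(1)] e[OF u'] using r by (intro mult_left_mono) auto
qed

lemma W_step2:
  assumes a: "0 < a" "a \<le> b" and v: "0 < v"
  shows "Wf k s l t a v \<le> Wf k s l t b v"
proof -
  have K: "0 < Kp k s a" "0 < Kp k s b" "0 < Kp l t v" using a v by (auto intro!: Kp_pos)
  have "a ^ s * Kp k s b \<le> b ^ s * Kp k s a" by (rule P1[OF a])
  then have "a ^ s / Kp k s a \<le> b ^ s / Kp k s b" using K by (simp add: divide_simps)
  then have "a ^ s / Kp k s a * (Kp l t v / v ^ t) \<le> b ^ s / Kp k s b * (Kp l t v / v ^ t)"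
    using K v by (intro mult_right_mono) auto
  then show ?thesis unfolding Wf_def by (simp add: field_simps)
qed

lemma W_mono:
  assumes k: "1 \<le> k" "k \<le> l" and ts: "t \<le> s"
    and x: "0 < uX" "uX \<le> uY" and y: "uY \<le> uY'" "0 < uX'"
    and r: "uX / uY \<le> uX' / uY'"
  shows "Wf k s l t uX uY \<le> Wf k s l t uX' uY'"
proof -
  define \<rho> where "\<rho> = uX / uY"
  have uY: "0 < uY" using x by simp
  have r0: "0 < \<rho>" "\<rho> \<le> 1" using x uY unfolding \<rho>_def by auto
  have e: "uX = \<rho> * uY" unfolding \<rho>_def using uY by simp
  have "Wf k s l t uX uY \<le> Wf k s l t (\<rho> * uY') uY'"
    unfolding e by (rule W_step1[OF k ts uY y(1) r0])
  also have "\<dots> \<le> Wf k s l t uX' uY'"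
  proof (rule W_step2)
    show "0 < \<rho> * uY'" using r0 uY y by auto
    show "0 < uY'" using uY y by auto
    show "\<rho> * uY' \<le> uX'" using r unfolding \<rho>_def using uY y by (simp add: divide_simps)
  qed
  finally show ?thesis .
qed

lemma ediv1[simp]: "(x::ennreal) / 1 = x" by (simp add: divide_ennreal_def)

locale acrv = fixes M :: "'a measure" and Z :: "'a \<Rightarrow> real" and f :: "real \<Rightarrow> real"
  assumes P: "prob_space M" and ac: "nonneg_ac_rv M Z f"
begin

abbreviation "F \<equiv> rv_cdf M Z"

lemma dist: "distr M lborel Z = density lborel f" and Zmeas: "Z \<in> borel_measurable M"
  and fmeas: "(\<lambda>x. ennreal (f x)) \<in> borel_measurable lborel"
  and fnn: "\<And>x. 0 \<le> f x" and AEnn: "AE \<omega> in M. 0 \<le> Z \<omega>" and smono: "strict_mono_on {0..} F"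
  using ac unfolding nonneg_ac_rv_def distributed_def by auto

lemma fmeas': "f \<in> borel_measurable borel"
proof -
  have "(\<lambda>x. enn2real (ennreal (f x))) \<in> borel_measurable lborel" using fmeas by measurable
  then show ?thesis using fnn by simp
qed

lemma rd: "real_distribution (density lborel f)"
proof -
  have "prob_space (distr M lborel Z)"
    using P Zmeas by (intro prob_space.prob_space_distr) auto
  then show ?thesis unfolding real_distribution_def real_distribution_axioms_def dist[symmetric] by simp
qed

lemma fbm: "finite_borel_measure (density lborel f)"
  using rd by (rule real_distribution.finite_borel_measure_M)

lemma F_cdf: "F x = cdf (density lborel f) x"
proof -
  have "cdf (density lborel f) x = measure (distr M lborel Z) {..x}" unfolding cdf_def dist ..
  also have "\<dots> = measure M (Z -` {..x} \<inter> space M)"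
    using Zmeas by (intro measure_distr) auto
  also have "Z -` {..x} \<inter> space M = {\<omega>\<in>space M. Z \<omega> \<le> x}" by auto
  finally show ?thesis unfolding rv_cdf_def by simp
qed

lemma F_cont: "isCont F x"
proof -
  have "emeasure (density lborel f) {x} = 0"
    using fmeas by (subst emeasure_density) (auto intro!: nn_integral_null_set countable_imp_null_set_lborel)
  then have "measure (density lborel f) {x} = 0" by (simp add: measure_def)
  then have "isCont (cdf (density lborel f)) x"
    using finite_borel_measure.isCont_cdf[OF fbm] by simp
  moreover have "F = cdf (density lborel f)" using F_cdf by auto
  ultimately show ?thesis by simp
qed

lemma F_mono: "x \<le> y \<Longrightarrow> F x \<le> F y"
  using finite_borel_measure.cdf_nondecreasing[OF fbm] F_cdf by simp

lemma F_nonneg: "0 \<le> F x"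
  using finite_borel_measure.cdf_nonneg[OF fbm] F_cdf by simp

lemma F_le1: "F x \<le> 1"
  using real_distribution.cdf_bounded_prob[OF rd] F_cdf by simp

lemma F_lim: "(F \<longlongrightarrow> 1) at_top"
proof -
  have "F = cdf (density lborel f)" using F_cdf by auto
  then show ?thesis using real_distribution.cdf_lim_at_top_prob[OF rd] by simp
qed

lemma F_neg: assumes "x < 0" shows "F x = 0"
proof -
  have s: "{\<omega>\<in>space M. Z \<omega> \<le> x} \<in> sets M" using Zmeas by measurable
  have "AE \<omega> in M. \<omega> \<notin> {\<omega>\<in>space M. Z \<omega> \<le> x}"
    using AEnn by eventually_elim (use assms in auto)
  then have "{\<omega>\<in>space M. Z \<omega> \<le> x} \<in> null_sets M" using AE_iff_null_sets[OF s] by simp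
  then show ?thesis unfolding rv_cdf_def by (rule measure_eq_0_null_sets)
qed

lemma F_0: "F 0 = 0"
proof -
  have lim: "((\<lambda>x. F x) \<longlongrightarrow> F 0) (at_left 0)"
    using F_cont[of 0] by (simp add: isCont_def filterlim_at_split)
  have ev: "eventually (\<lambda>x. 0 = F x) (at_left (0::real))"
  proof -
    have "eventually (\<lambda>x. x \<in> {-1<..<0}) (at_left (0::real))"
      by (rule eventually_at_left_real) simp
    then show ?thesis by eventually_elim (simp add: F_neg)
  qed
  have "((\<lambda>x. F x) \<longlongrightarrow> 0) (at_left 0)"
    by (rule Lim_transform_eventually[OF tendsto_const ev])
  then show ?thesis using tendsto_unique[OF _ lim] by (simp add: trivial_limit_at_left_real)
qed

lemma F_nonpos: "x \<le> 0 \<Longrightarrow> F x = 0"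
  using F_neg F_0 by (cases "x = 0") auto

lemma F_pos: "0 < x \<Longrightarrow> 0 < F x"
proof -
  assume x: "0 < x"
  have "F 0 < F x" using smono x unfolding strict_mono_on_def by auto
  then show ?thesis using F_0 by simp
qed

lemma F_lt1: "F x < 1"
proof -
  have "F (max x 0) < F (max x 0 + 1)"
    using smono unfolding strict_mono_on_def by auto
  then have "F (max x 0) < 1" using F_le1[of "max x 0 + 1"] by simp
  moreover have "F x \<le> F (max x 0)" by (intro F_mono) auto
  ultimately show ?thesis by simp
qed

lemma F_meas: "F \<in> borel_measurable borel"
  by (rule borel_measurable_mono) (auto simp: mono_def F_mono)

lemma F_level:
  assumes u: "0 \<le> u" "u < 1"
  obtains s where "0 \<le> s" "F s = u" "\<And>t. F t \<le> u \<longleftrightarrow> t \<le> s"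
proof -
  have "eventually (\<lambda>t. u < F t) at_top"
    using F_lim u by (intro order_tendstoD) auto
  then obtain T where T: "\<And>t. t \<ge> T \<Longrightarrow> u < F t" unfolding eventually_at_top_linorder by auto
  define T' where "T' = max T 0"
  have "\<exists>s. 0 \<le> s \<and> s \<le> T' \<and> F s = u"
  proof (rule IVT')
    show "F 0 \<le> u" using F_0 u by simp
    show "u \<le> F T'" using T[of T'] unfolding T'_def by simp
    show "0 \<le> T'" unfolding T'_def by simp
    show "continuous_on {0..T'} F" using F_cont by (intro continuous_at_imp_continuous_on) auto
  qed
  then obtain s where s: "0 \<le> s" "F s = u" by auto
  have "F t \<le> u \<longleftrightarrow> t \<le> s" for t
  proof
    assume "t \<le> s" then show "F t \<le> u" using F_mono s by auto
  next
    assume "F t \<le> u"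
    show "t \<le> s"
    proof (rule ccontr)
      assume "\<not> t \<le> s"
      then have "F s < F t" using smono s unfolding strict_mono_on_def by auto
      then show False using \<open>F t \<le> u\<close> s by simp
    qed
  qed
  then show ?thesis using that s by blast
qed

definition "U = uniform_measure lborel {0..(1::real)}"

lemma U_rd: "real_distribution U"
  unfolding U_def real_distribution_def real_distribution_axioms_def
  by (auto intro!: prob_space_uniform_measure)

lemma cdf_U: "cdf U u = (if u < 0 then 0 else if u < 1 then u else 1)"
proof -
  have "emeasure U {..u} = emeasure lborel ({0..1} \<inter> {..u})"
    unfolding U_def by (subst emeasure_uniform_measure) auto
  also have "{0..1} \<inter> {..u} = (if u < 0 then {} else {0..min 1 u})" by auto
  finally show ?thesis unfolding cdf_def measure_def by (auto simp: min_def)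
qed

lemma distr_F: "distr (density lborel f) borel F = U"
proof (rule cdf_unique)
  show "real_distribution (distr (density lborel f) borel F)"
    using rd F_meas unfolding real_distribution_def real_distribution_axioms_def
    by (auto intro!: prob_space.prob_space_distr)
  show "real_distribution U" by (rule U_rd)
  show "cdf (distr (density lborel f) borel F) = cdf U"
  proof
    fix u
    have "cdf (distr (density lborel f) borel F) u = measure (density lborel f) (F -` {..u} \<inter> space (density lborel f))"
      unfolding cdf_def using F_meas by (intro measure_distr) auto
    also have "\<dots> = measure (density lborel f) {t. F t \<le> u}"
    proof -
      have "F -` {..u} \<inter> space (density lborel f) = {t. F t \<le> u}" by auto
      then show ?thesis by simp
    qed
    also have "\<dots> = cdf U u"
    proof (cases "u < 0")
      case True
      then have "{t. F t \<le> u} = {}" using F_nonneg by (auto simp: not_le intro: less_le_trans)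
      then show ?thesis using True cdf_U by simp
    next
      case False
      show ?thesis
      proof (cases "u < 1")
        case True
        obtain s where s: "0 \<le> s" "F s = u" "\<And>t. F t \<le> u \<longleftrightarrow> t \<le> s"
          using F_level[of u] False True by auto
        have "{t. F t \<le> u} = {..s}" using s by auto
        then have "measure (density lborel f) {t. F t \<le> u} = F s" using F_cdf unfolding cdf_def by simp
        then show ?thesis using s cdf_U False True by simp
      next
        case False2: False
        have "F t \<le> u" for t using F_le1[of t] False2 by linarith
        then have "{t. F t \<le> u} = UNIV" by auto
        then have "measure (density lborel f) {t. F t \<le> u} = 1"
          using prob_space.prob_space[of "density lborel f"] rd
          unfolding real_distribution_def by simp
        then show ?thesis using cdf_U False False2 by simp
      qed
    qed
    finally show "cdf (distr (density lborel f) borel F) u = cdf U u" .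
  qed
qed

lemma change_var:
  assumes psi: "\<psi> \<in> borel_measurable borel"
  shows "(\<integral>\<^sup>+t. ennreal (f t) * \<psi> (F t) \<partial>lborel) = (\<integral>\<^sup>+u. \<psi> u * indicator {0..1} u \<partial>lborel)"
proof -
  have "(\<integral>\<^sup>+t. ennreal (f t) * \<psi> (F t) \<partial>lborel) = (\<integral>\<^sup>+t. \<psi> (F t) \<partial>density lborel f)"
    using fmeas psi F_meas by (subst nn_integral_density) auto
  also have "\<dots> = (\<integral>\<^sup>+u. \<psi> u \<partial>distr (density lborel f) borel F)"
    using psi F_meas by (subst nn_integral_distr) auto
  also have "\<dots> = (\<integral>\<^sup>+u. \<psi> u \<partial>U)" unfolding distr_F ..
  also have "\<dots> = (\<integral>\<^sup>+u. \<psi> u * indicator {0..1} u \<partial>lborel)"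
    unfolding U_def using psi by (subst nn_integral_uniform_measure) auto
  finally show ?thesis .
qed

end

lemma fin_lt[simp]: "finite {i. i < (n::nat) \<and> P i}"
  by (rule finite_subset[of _ "{..<n}"]) auto

lemma card_anti:
  assumes "x \<le> y"
  shows "card {i. i < (n::nat) \<and> y < X i (\<omega>::'a)} \<le> card {i. i < n \<and> x < (X i \<omega>::real)}"
proof (rule card_mono)
  show "finite {i. i < n \<and> x < X i \<omega>}" by (rule finite_subset[of _ "{..<n}"]) auto
qed (use assms in auto)

lemma kofn_le_iff:
  assumes k: "1 \<le> k" "k \<le> n"
  shows "kofn_lifetime k n X \<omega> \<le> x \<longleftrightarrow> card {i. i < n \<and> x < X i \<omega>} < k"
proof -
  define T where "T = {t. k \<le> card {i. i < n \<and> t < X i \<omega>}}"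
  define m where "m = Min ((\<lambda>i. X i \<omega>) ` {..<n})"
  have n0: "{..<n} \<noteq> {}" using k by (auto simp: lessThan_empty_iff)
  have m_le: "m \<le> X i \<omega>" if "i < n" for i
    unfolding m_def using that by (intro Min_le) auto
  have "m - 1 \<in> T"
  proof -
    have "{i. i < n \<and> m - 1 < X i \<omega>} = {..<n}" using m_le by force
    then show ?thesis unfolding T_def using k by simp
  qed
  then have Tne: "T \<noteq> {}" by auto
  define M where "M = Max ((\<lambda>i. X i \<omega>) ` {..<n})"
  have M_ge: "X i \<omega> \<le> M" if "i < n" for i
    unfolding M_def using that by (intro Max_ge) auto
  have Tbd: "t \<le> M" if "t \<in> T" for t
  proof (rule ccontr)
    assume "\<not> t \<le> M"
    then have e: "{i. i < n \<and> t < X i \<omega>} = {}" using M_ge by force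
    show False using that k e unfolding T_def by simp
  qed
  then have bdd: "bdd_above T" by (auto simp: bdd_above_def)
  show ?thesis
  proof
    assume le: "kofn_lifetime k n X \<omega> \<le> x"
    show "card {i. i < n \<and> x < X i \<omega>} < k"
    proof (rule ccontr)
      assume "\<not> card {i. i < n \<and> x < X i \<omega>} < k"
      then have ck: "k \<le> card {i. i < n \<and> x < X i \<omega>}" by simp
      define S where "S = {i. i < n \<and> x < X i \<omega>}"
      have "0 < card S" using ck k unfolding S_def by linarith
      then have Sne: "S \<noteq> {}" by (metis card.empty less_irrefl)
      have Sfin: "finite S" unfolding S_def by auto
      define t0 where "t0 = Min ((\<lambda>i. X i \<omega>) ` S)"
      have t0x: "x < t0" unfolding t0_def using Sne Sfin by (subst Min_gr_iff) (auto simp: S_def)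
      define t where "t = (x + t0) / 2"
      have "S \<subseteq> {i. i < n \<and> t < X i \<omega>}"
      proof
        fix i assume i: "i \<in> S"
        have "t0 \<le> X i \<omega>" unfolding t0_def using i Sfin by (intro Min_le) auto
        then show "i \<in> {i. i < n \<and> t < X i \<omega>}" using i t0x unfolding t_def S_def by auto
      qed
      then have "card S \<le> card {i. i < n \<and> t < X i \<omega>}" by (intro card_mono) auto
      then have "t \<in> T" using ck unfolding T_def S_def by simp
      then have "t \<le> kofn_lifetime k n X \<omega>" unfolding kofn_lifetime_def T_def[symmetric]
        using bdd by (intro cSup_upper)
      then show False using le t0x unfolding t_def by simp
    qed
  next
    assume lt: "card {i. i < n \<and> x < X i \<omega>} < k"
    have "t < x" if "t \<in> T" for t
    proof (rule ccontr)
      assume "\<not> t < x"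
      then have "card {i. i < n \<and> t < X i \<omega>} \<le> card {i. i < n \<and> x < X i \<omega>}"
        by (intro card_anti) simp
      then show False using that lt unfolding T_def by simp
    qed
    then show "kofn_lifetime k n X \<omega> \<le> x" unfolding kofn_lifetime_def T_def[symmetric]
      using Tne by (intro cSup_least) (auto intro: less_imp_le)
  qed
qed

lemma (in prob_space) binom_prob:
  fixes X :: "nat \<Rightarrow> 'a \<Rightarrow> real"
  assumes ind: "indep_vars (\<lambda>_. borel) X {..<n}" and n: "1 \<le> n"
    and p: "\<And>i. i < n \<Longrightarrow> prob {\<omega>\<in>space M. x < X i \<omega>} = p"
  shows "prob {\<omega>\<in>space M. k \<le> card {i. i < n \<and> x < X i \<omega>}}
       = (\<Sum>j\<in>{k..n}. real (n choose j) * p ^ j * (1 - p) ^ (n - j))"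
    and "{\<omega>\<in>space M. k \<le> card {i. i < n \<and> x < X i \<omega>}} \<in> events"
proof -
  have rv: "random_variable borel (X i)" if "i < n" for i
    using ind that unfolding indep_vars_def2 by auto
  have ev_gt: "{\<omega>\<in>space M. x < X i \<omega>} \<in> events" if "i < n" for i
    using rv[OF that] by measurable
  have q: "prob {\<omega>\<in>space M. X i \<omega> \<le> x} = 1 - p" if "i < n" for i
  proof -
    have "{\<omega>\<in>space M. X i \<omega> \<le> x} = space M - {\<omega>\<in>space M. x < X i \<omega>}" by auto
    then show ?thesis using prob_compl[OF ev_gt[OF that]] p[OF that] by simp
  qed
  define B where "B S i = {\<omega>\<in>space M. if i \<in> S then x < X i \<omega> else X i \<omega> \<le> x}" for S i
  define At where "At S = {\<omega>\<in>space M. {i. i < n \<and> x < X i \<omega>} = S}" for S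
  define Ss where "Ss = {S. S \<subseteq> {..<n} \<and> k \<le> card S}"
  have finSs: "finite Ss" unfolding Ss_def
    by (rule finite_subset[of _ "Pow {..<n}"]) auto
  have At_B: "At S = (\<Inter>i\<in>{..<n}. B S i)" if "S \<subseteq> {..<n}" for S
  proof -
    have ne: "{..<n} \<noteq> {}" using n by (auto simp: lessThan_empty_iff)
    show ?thesis
      unfolding At_def B_def using that ne by (auto split: if_splits; metis lessThan_iff not_le)
  qed
  have indB: "indep_events (B S) {..<n}" for S
    unfolding B_def
  proof (rule indep_eventsI_indep_vars[OF ind, where P = "\<lambda>i y. if i \<in> S then x < y else y \<le> x"])
    fix i show "{y \<in> space borel. if i \<in> S then x < y else y \<le> x} \<in> sets borel"
      by (cases "i \<in> S") auto
  qed
  have evB: "B S i \<in> events" if "i < n" for S i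
    using indB[of S] that unfolding indep_events_def by auto
  have prB: "prob (B S i) = (if i \<in> S then p else 1 - p)" if "i < n" for S i
    using p[OF that] q[OF that] unfolding B_def by (cases "i \<in> S") auto
  have prAt: "prob (At S) = p ^ card S * (1 - p) ^ (n - card S)" if S: "S \<subseteq> {..<n}" for S
  proof -
    have "prob (At S) = (\<Prod>i\<in>{..<n}. prob (B S i))"
      unfolding At_B[OF S] using indB[of S] n unfolding indep_events_def
      by (auto simp: lessThan_empty_iff)
    also have "\<dots> = (\<Prod>i\<in>{..<n}. if i \<in> S then p else 1 - p)"
      using prB by (intro prod.cong) auto
    also have "\<dots> = prod (\<lambda>_. p) ({..<n} \<inter> {i. i \<in> S}) * prod (\<lambda>_. 1 - p) ({..<n} \<inter> - {i. i \<in> S})"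
      by (rule prod.If_cases) auto
    also have "{..<n} \<inter> {i. i \<in> S} = S" using S by auto
    also have "prod (\<lambda>_. 1 - p) ({..<n} \<inter> - {i. i \<in> S}) = (1 - p) ^ (n - card S)"
    proof -
      have "{..<n} \<inter> - {i. i \<in> S} = {..<n} - S" by auto
      then have "card ({..<n} \<inter> - {i. i \<in> S}) = n - card S"
        using S by (simp add: card_Diff_subset finite_subset)
      then show ?thesis by simp
    qed
    finally show ?thesis by simp
  qed
  have evAt: "At S \<in> events" if S: "S \<subseteq> {..<n}" for S
    unfolding At_B[OF S] using evB n by (intro sets.finite_INT) (auto simp: lessThan_empty_iff)
  have E: "{\<omega>\<in>space M. k \<le> card {i. i < n \<and> x < X i \<omega>}} = (\<Union>S\<in>Ss. At S)"
    unfolding Ss_def At_def by auto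
  show "{\<omega>\<in>space M. k \<le> card {i. i < n \<and> x < X i \<omega>}} \<in> events"
    unfolding E using finSs evAt unfolding Ss_def by (intro sets.finite_UN) auto
  have "prob {\<omega>\<in>space M. k \<le> card {i. i < n \<and> x < X i \<omega>}} = (\<Sum>S\<in>Ss. prob (At S))"
    unfolding E
  proof (rule finite_measure_finite_Union[OF finSs])
    show "At ` Ss \<subseteq> events" using evAt unfolding Ss_def by auto
    show "disjoint_family_on At Ss" unfolding disjoint_family_on_def At_def by auto
  qed
  also have "\<dots> = (\<Sum>S\<in>Ss. p ^ card S * (1 - p) ^ (n - card S))"
    using prAt unfolding Ss_def by (intro sum.cong) auto
  also have "\<dots> = (\<Sum>j\<in>{k..n}. \<Sum>S\<in>{S \<in> Ss. card S = j}. p ^ card S * (1 - p) ^ (n - card S))"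
  proof (rule sum.group[symmetric, OF finSs])
    show "finite {k..n}" by simp
    show "card ` Ss \<subseteq> {k..n}" unfolding Ss_def
    proof clarsimp
      fix S assume "S \<subseteq> {..<n}" "k \<le> card S"
      then show "card S \<le> n" using card_mono[of "{..<n}" S] by simp
    qed
  qed
  also have "\<dots> = (\<Sum>j\<in>{k..n}. real (n choose j) * p ^ j * (1 - p) ^ (n - j))"
  proof (rule sum.cong[OF refl])
    fix j assume j: "j \<in> {k..n}"
    have e: "{S \<in> Ss. card S = j} = {S. S \<subseteq> {..<n} \<and> card S = j}"
      using j unfolding Ss_def by auto
    have "(\<Sum>S\<in>{S \<in> Ss. card S = j}. p ^ card S * (1 - p) ^ (n - card S))
        = (\<Sum>S\<in>{S. S \<subseteq> {..<n} \<and> card S = j}. p ^ j * (1 - p) ^ (n - j))"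
      unfolding e by (intro sum.cong) auto
    also have "\<dots> = real (card {S. S \<subseteq> {..<n} \<and> card S = j}) * (p ^ j * (1 - p) ^ (n - j))"
      by simp
    also have "card {S. S \<subseteq> {..<n} \<and> card S = j} = n choose j"
      using n_subsets[of "{..<n}" j] by simp
    finally show "(\<Sum>S\<in>{S \<in> Ss. card S = j}. p ^ card S * (1 - p) ^ (n - card S))
        = real (n choose j) * p ^ j * (1 - p) ^ (n - j)" by simp
  qed
  finally show "prob {\<omega>\<in>space M. k \<le> card {i. i < n \<and> x < X i \<omega>}}
       = (\<Sum>j\<in>{k..n}. real (n choose j) * p ^ j * (1 - p) ^ (n - j))" .
qed

lemma pascal_term:
  fixes p q :: real
  assumes pq: "p + q = 1" and j: "1 \<le> j" "j \<le> Suc n"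
  shows "real (Suc n choose j) * p ^ j * q ^ (Suc n - j)
       = q * (real (n choose j) * p ^ j * q ^ (n - j)) + p * (real (n choose (j - 1)) * p ^ (j - 1) * q ^ (n - (j - 1)))"
proof -
  obtain j' where j': "j = Suc j'" using j by (cases j) auto
  have C: "real (Suc n choose j) = real (n choose j) + real (n choose j')"
    unfolding j' by simp
  have t1: "real (n choose j) * p ^ j * q ^ (Suc n - j) = q * (real (n choose j) * p ^ j * q ^ (n - j))"
  proof (cases "j \<le> n")
    case True
    then have "Suc n - j = Suc (n - j)" by simp
    then show ?thesis by simp
  next
    case False
    then have "n choose j = 0" by simp
    then show ?thesis by simp
  qed
  have t2: "real (n choose j') * p ^ j * q ^ (Suc n - j) = p * (real (n choose j') * p ^ j' * q ^ (n - j'))"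
    unfolding j' by simp
  show ?thesis unfolding C using t1 t2 j' by (simp add: algebra_simps)
qed

lemma tail_step:
  fixes p q :: real
  assumes pq: "p + q = 1" and k: "1 \<le> k" "k \<le> n"
  shows "(\<Sum>j\<in>{k..Suc n}. real (Suc n choose j) * p ^ j * q ^ (Suc n - j))
       = (\<Sum>j\<in>{k..n}. real (n choose j) * p ^ j * q ^ (n - j)) + real (n choose (k - 1)) * p ^ k * q ^ (Suc n - k)"
proof -
  define f where "f j = real (n choose j) * p ^ j * q ^ (n - j)" for j
  have "(\<Sum>j\<in>{k..Suc n}. real (Suc n choose j) * p ^ j * q ^ (Suc n - j))
      = (\<Sum>j\<in>{k..Suc n}. q * f j + p * f (j - 1))"
    using k unfolding f_def by (intro sum.cong refl pascal_term[OF pq]) auto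
  also have "\<dots> = q * (\<Sum>j\<in>{k..Suc n}. f j) + p * (\<Sum>j\<in>{k..Suc n}. f (j - 1))"
    by (simp only: sum.distrib sum_distrib_left)
  also have "(\<Sum>j\<in>{k..Suc n}. f j) = (\<Sum>j\<in>{k..n}. f j)"
    using k by (simp add: f_def)
  also have "(\<Sum>j\<in>{k..Suc n}. f (j - 1)) = f (k - 1) + (\<Sum>j\<in>{k..n}. f j)"
  proof -
    obtain k' where k': "k = Suc k'" using k by (cases k) auto
    have "(\<Sum>j\<in>{k..Suc n}. f (j - 1)) = (\<Sum>j\<in>{k'..n}. f j)"
      unfolding k' sum.shift_bounds_cl_Suc_ivl by simp
    also have "\<dots> = f k' + (\<Sum>j\<in>{Suc k'..n}. f j)"
      using k k' by (intro sum.atLeast_Suc_atMost) auto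
    finally show ?thesis unfolding k' by simp
  qed
  finally have "(\<Sum>j\<in>{k..Suc n}. real (Suc n choose j) * p ^ j * q ^ (Suc n - j))
      = (p + q) * (\<Sum>j\<in>{k..n}. f j) + p * f (k - 1)" by (simp add: algebra_simps)
  also have "p * f (k - 1) = real (n choose (k - 1)) * p ^ k * q ^ (Suc n - k)"
  proof -
    have "p * p ^ (k - 1) = p ^ k" using k by (metis Suc_diff_le diff_Suc_1 power_Suc le_add_diff_inverse2 add_diff_cancel_left' plus_1_eq_Suc)
    moreover have "n - (k - 1) = Suc n - k" using k by simp
    ultimately show ?thesis unfolding f_def by (simp add: algebra_simps)
  qed
  finally show ?thesis using pq unfolding f_def by simp
qed

lemma tail_K:
  fixes p q :: real
  assumes pq: "p + q = 1" and k: "1 \<le> k"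
  shows "(\<Sum>j\<in>{k..k + s}. real ((k + s) choose j) * p ^ j * q ^ (k + s - j)) = p ^ k * Kp k s q"
proof (induction s)
  case 0
  then show ?case by (simp add: Kp_def)
next
  case (Suc s)
  have "(\<Sum>j\<in>{k..k + Suc s}. real ((k + Suc s) choose j) * p ^ j * q ^ (k + Suc s - j))
      = (\<Sum>j\<in>{k..Suc (k + s)}. real (Suc (k + s) choose j) * p ^ j * q ^ (Suc (k + s) - j))"
    by simp
  also have "\<dots> = (\<Sum>j\<in>{k..k + s}. real ((k + s) choose j) * p ^ j * q ^ (k + s - j))
       + real ((k + s) choose (k - 1)) * p ^ k * q ^ (Suc (k + s) - k)"
    by (rule tail_step[OF pq k]) simp
  also have "\<dots> = p ^ k * Kp k s q + p ^ k * (real ((k + s) choose Suc s) * q ^ Suc s)"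
  proof -
    have "(k + s) choose (k - 1) = (k + s) choose Suc s"
      using k by (subst binomial_symmetric) (auto simp: Suc_diff_le)
    moreover have "Suc (k + s) - k = Suc s" by simp
    ultimately show ?thesis unfolding Suc.IH by (simp add: algebra_simps)
  qed
  also have "\<dots> = p ^ k * Kp k (Suc s) q"
    using Kp_Suc[OF k] by (simp add: algebra_simps)
  finally show ?case .
qed

lemma Kp0: "Kp k s 0 = 1"
  by (induction s) (simp_all add: Kp_def)

lemma dphi_nonneg: "0 \<le> u \<Longrightarrow> u \<le> 1 \<Longrightarrow> 0 \<le> dphi k s u"
  unfolding dphi_def by simp

lemma dphi_pos: "1 \<le> k \<Longrightarrow> 0 < u \<Longrightarrow> u < 1 \<Longrightarrow> 0 < dphi k s u"
  unfolding dphi_def by (auto intro!: mult_pos_pos)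

lemma dphi_meas: "dphi k s \<in> borel_measurable borel"
  unfolding dphi_def by measurable

lemma int_dphi:
  assumes k: "1 \<le> k" and v: "0 \<le> v" "v \<le> 1"
  shows "(\<integral>\<^sup>+u. ennreal (dphi k s u) * indicator {0..v} u \<partial>lborel) = ennreal (1 - (1 - v) ^ k * Kp k s v)"
proof -
  have "(\<integral>\<^sup>+u. ennreal (dphi k s u) * indicator {0..v} u \<partial>lborel)
      = ennreal ((\<lambda>u. - ((1 - u) ^ k * Kp k s u)) v - (\<lambda>u. - ((1 - u) ^ k * Kp k s u)) 0)"
  proof (rule nn_integral_FTC_Icc)
    show "dphi k s \<in> borel_measurable borel" by (rule dphi_meas)
    fix x :: real
    show "((\<lambda>u. - ((1 - u) ^ k * Kp k s u)) has_real_derivative dphi k s x) (at x)"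
      using DERIV_minus[OF deriv_surv[OF k, of s x]] by simp
    assume "x \<in> {0..v}"
    then show "0 \<le> dphi k s x" using v by (intro dphi_nonneg) auto
  qed (use v in auto)
  then show ?thesis by (simp add: Kp0)
qed

definition Hk :: "nat \<Rightarrow> nat \<Rightarrow> real \<Rightarrow> real" where
  "Hk k s u = real (k + s) * real ((k - 1 + s) choose s) * u ^ s / Kp k s u"

locale kofn =
  fixes M :: "'a measure" and X :: "nat \<Rightarrow> 'a \<Rightarrow> real" and f :: "real \<Rightarrow> real" and n k :: nat
  assumes P: "prob_space M" and ind: "prob_space.indep_vars M (\<lambda>_. borel) X {..<n}"
    and acs: "\<forall>i<n. nonneg_ac_rv M (X i) f" and k: "1 \<le> k" "k \<le> n"
begin

abbreviation "F \<equiv> rv_cdf M (X 0)"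
abbreviation "\<tau> \<equiv> kofn_lifetime k n X"
abbreviation "s \<equiv> n - k"

lemma n0: "0 < n" using k by simp

lemma acXi: "i < n \<Longrightarrow> acrv M (X i) f"
  using P acs by (intro acrv.intro) auto

sublocale A0: acrv M "X 0" f
  by (rule acXi[OF n0])

lemma F_i: "i < n \<Longrightarrow> rv_cdf M (X i) x = F x"
proof -
  assume i: "i < n"
  interpret Ai: acrv M "X i" f by (rule acXi[OF i])
  show ?thesis using Ai.F_cdf A0.F_cdf by simp
qed

lemma prob_gt: "i < n \<Longrightarrow> prob_space.prob M {\<omega>\<in>space M. x < X i \<omega>} = 1 - F x"
proof -
  assume i: "i < n"
  interpret Ai: acrv M "X i" f by (rule acXi[OF i])
  have ev: "{\<omega>\<in>space M. X i \<omega> \<le> x} \<in> sets M" using Ai.Zmeas by measurable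
  have "{\<omega>\<in>space M. x < X i \<omega>} = space M - {\<omega>\<in>space M. X i \<omega> \<le> x}" by auto
  then show ?thesis using prob_space.prob_compl[OF P ev] F_i[OF i] unfolding rv_cdf_def by simp
qed

definition "E x = {\<omega>\<in>space M. k \<le> card {i. i < n \<and> x < X i \<omega>}}"

lemma E_facts: "E x \<in> sets M \<and> measure M (E x) = (\<Sum>j\<in>{k..n}. real (n choose j) * (1 - F x) ^ j * (1 - (1 - F x)) ^ (n - j))"
proof -
  have n1: "1 \<le> n" using n0 by simp
  have h: "\<And>i. i < n \<Longrightarrow> prob_space.prob M {\<omega>\<in>space M. x < X i \<omega>} = 1 - F x" by (rule prob_gt)
  note r = prob_space.binom_prob[OF P ind n1 h, of k]
  show ?thesis unfolding E_def using r by blast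
qed

lemma E_ev: "E x \<in> sets M" using E_facts by blast

lemma E_prob: "measure M (E x) = (\<Sum>j\<in>{k..n}. real (n choose j) * (1 - F x) ^ j * (1 - (1 - F x)) ^ (n - j))"
  using E_facts by blast

lemma tau_le: "{\<omega>\<in>space M. \<tau> \<omega> \<le> x} = space M - E x"
  unfolding E_def by (auto simp: kofn_le_iff[OF k])

lemma tau_meas: "\<tau> \<in> borel_measurable M"
proof (subst borel_measurable_iff_le, intro allI)
  fix a
  show "{w \<in> space M. \<tau> w \<le> a} \<in> sets M"
    unfolding tau_le using E_ev by (intro sets.Diff) auto
qed

lemma cdf_tau: "rv_cdf M \<tau> x = 1 - (1 - F x) ^ k * Kp k s (F x)"
proof -
  have "rv_cdf M \<tau> x = 1 - measure M (E x)"
    unfolding rv_cdf_def tau_le using prob_space.prob_compl[OF P E_ev] by simp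
  also have "measure M (E x) = (1 - F x) ^ k * Kp k s (F x)"
  proof -
    have nk: "n = k + s" using k by simp
    have "measure M (E x) = (\<Sum>j\<in>{k..k + s}. real ((k + s) choose j) * (1 - F x) ^ j * F x ^ (k + s - j))"
      unfolding E_prob using nk by simp
    also have "\<dots> = (1 - F x) ^ k * Kp k s (F x)"
      by (rule tail_K) (use k in auto)
    finally show ?thesis .
  qed
  finally show ?thesis .
qed

definition gd :: "real \<Rightarrow> real" where "gd t = dphi k s (F t) * f t"

lemma gd_nonneg: "0 \<le> gd t"
  unfolding gd_def using A0.F_nonneg A0.F_le1 A0.fnn by (intro mult_nonneg_nonneg dphi_nonneg) auto

lemma gd_meas: "(\<lambda>t. ennreal (gd t)) \<in> borel_measurable borel"
proof -
  have "gd \<in> borel_measurable borel" unfolding gd_def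
    using dphi_meas A0.F_meas A0.fmeas' by measurable
  then show ?thesis by measurable
qed

lemma gd_int: "(\<integral>\<^sup>+t. ennreal (gd t) * \<psi> t \<partial>lborel) = (\<integral>\<^sup>+t. ennreal (f t) * (ennreal (dphi k s (F t)) * \<psi> t) \<partial>lborel)"
  unfolding gd_def using A0.fnn A0.F_nonneg A0.F_le1
  by (intro nn_integral_cong) (simp add: ennreal_mult dphi_nonneg mult_ac)

lemma cdf_dens:
  assumes x: "0 \<le> x"
  shows "emeasure (density lborel gd) {..x} = ennreal (1 - (1 - F x) ^ k * Kp k s (F x))"
proof -
  have ind: "indicator {..x} t = (indicator {..F x} (F t) :: ennreal)" for t
  proof (cases "t \<le> x")
    case True then show ?thesis using A0.F_mono by (auto simp: indicator_def)
  next
    case False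
    then have "F x < F t" using A0.smono x unfolding strict_mono_on_def by auto
    then show ?thesis using False by (auto simp: indicator_def)
  qed
  have "emeasure (density lborel gd) {..x} = (\<integral>\<^sup>+t. ennreal (gd t) * indicator {..x} t \<partial>lborel)"
    using gd_meas by (subst emeasure_density) (auto simp: mult.commute)
  also have "\<dots> = (\<integral>\<^sup>+t. ennreal (f t) * ((\<lambda>u. ennreal (dphi k s u) * indicator {..F x} u) (F t)) \<partial>lborel)"
    unfolding gd_int ind by simp
  also have "\<dots> = (\<integral>\<^sup>+u. ennreal (dphi k s u) * indicator {..F x} u * indicator {0..1} u \<partial>lborel)"
    by (rule A0.change_var) (use dphi_meas in measurable)
  also have "\<dots> = (\<integral>\<^sup>+u. ennreal (dphi k s u) * indicator {0..F x} u \<partial>lborel)"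
    using A0.F_le1[of x] A0.F_nonneg[of x]
    by (intro nn_integral_cong) (auto simp: indicator_def)
  also have "\<dots> = ennreal (1 - (1 - F x) ^ k * Kp k s (F x))"
    using k A0.F_le1[of x] A0.F_nonneg[of x] by (intro int_dphi) auto
  finally show ?thesis .
qed

lemma dens_total: "emeasure (density lborel gd) UNIV = 1"
proof -
  have "emeasure (density lborel gd) UNIV = (\<integral>\<^sup>+t. ennreal (gd t) * 1 \<partial>lborel)"
    using gd_meas by (subst emeasure_density) auto
  also have "\<dots> = (\<integral>\<^sup>+t. ennreal (f t) * ((\<lambda>u. ennreal (dphi k s u) * 1) (F t)) \<partial>lborel)"
    unfolding gd_int by simp
  also have "\<dots> = (\<integral>\<^sup>+u. ennreal (dphi k s u) * 1 * indicator {0..1} u \<partial>lborel)"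
    by (rule A0.change_var) (use dphi_meas in measurable)
  also have "\<dots> = ennreal (1 - (1 - 1) ^ k * Kp k s 1)"
    using k by (simp add: int_dphi)
  also have "\<dots> = 1" using k by simp
  finally show ?thesis .
qed

lemma rd_dens: "real_distribution (density lborel gd)"
  unfolding real_distribution_def real_distribution_axioms_def
  using dens_total by (auto intro!: prob_spaceI)

lemma rd_tau: "real_distribution (distr M lborel \<tau>)"
proof -
  have "prob_space (distr M lborel \<tau>)"
    using P tau_meas by (intro prob_space.prob_space_distr) auto
  then show ?thesis unfolding real_distribution_def real_distribution_axioms_def by simp
qed

lemma cdf_tau': "cdf (distr M lborel \<tau>) x = rv_cdf M \<tau> x"
proof -
  have "cdf (distr M lborel \<tau>) x = measure M (\<tau> -` {..x} \<inter> space M)"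
    unfolding cdf_def using tau_meas by (intro measure_distr) auto
  also have "\<tau> -` {..x} \<inter> space M = {\<omega>\<in>space M. \<tau> \<omega> \<le> x}" by auto
  finally show ?thesis unfolding rv_cdf_def .
qed

lemma cdf_dens': "cdf (density lborel gd) x = rv_cdf M \<tau> x"
proof (cases "0 \<le> x")
  case True
  have "cdf (density lborel gd) x = enn2real (ennreal (1 - (1 - F x) ^ k * Kp k s (F x)))"
    unfolding cdf_def measure_def cdf_dens[OF True] ..
  also have "\<dots> = 1 - (1 - F x) ^ k * Kp k s (F x)"
  proof -
    have "(1 - F x) ^ k * Kp k s (F x) \<le> 1"
      using cdf_tau[of x] real_distribution.cdf_bounded_prob[OF rd_tau, of x] cdf_tau'[of x]
        finite_borel_measure.cdf_nonneg[OF real_distribution.finite_borel_measure_M[OF rd_tau], of x]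
      by simp
    then show ?thesis by simp
  qed
  finally show ?thesis using cdf_tau by simp
next
  case False
  have fb: "finite_borel_measure (density lborel gd)"
    by (rule real_distribution.finite_borel_measure_M[OF rd_dens])
  have "cdf (density lborel gd) x \<le> cdf (density lborel gd) 0"
    using False by (intro finite_borel_measure.cdf_nondecreasing[OF fb]) auto
  also have "cdf (density lborel gd) 0 = 0"
  proof -
    have "emeasure (density lborel gd) {..0} = ennreal (1 - (1 - F 0) ^ k * Kp k s (F 0))"
      by (rule cdf_dens) simp
    then show ?thesis unfolding cdf_def measure_def using A0.F_0 by (simp add: Kp0)
  qed
  finally have "cdf (density lborel gd) x = 0"
    using finite_borel_measure.cdf_nonneg[OF fb, of x] by simp
  moreover have "rv_cdf M \<tau> x = 0" unfolding cdf_tau using A0.F_nonpos[of x] False by (simp add: Kp0)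
  ultimately show ?thesis by simp
qed

lemma distr_tau: "distr M lborel \<tau> = density lborel gd"
  by (rule cdf_unique[OF rd_tau rd_dens]) (auto simp: cdf_tau' cdf_dens')

lemma Sv_decr:
  assumes "0 \<le> a" "a < b" "b \<le> 1"
  shows "(1 - b) ^ k * Kp k s b < (1 - a) ^ k * Kp k s a"
proof (rule DERIV_neg_imp_decreasing_open[OF assms(2)])
  fix x assume "a < x" "x < b"
  then show "\<exists>y. ((\<lambda>u. (1 - u) ^ k * Kp k s u) has_real_derivative y) (at x) \<and> y < 0"
    using deriv_surv[OF k(1), of s x] dphi_pos[OF k(1), of x s] assms by (intro exI[of _ "- dphi k s x"]) auto
next
  show "continuous_on {a..b} (\<lambda>u. (1 - u) ^ k * Kp k s u)"
    using deriv_surv[OF k(1), of s] by (intro DERIV_continuous_on) (auto intro: has_field_derivative_at_within)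
qed

lemma AE_tau: "AE \<omega> in M. 0 \<le> \<tau> \<omega>"
proof -
  have "AE \<omega> in M. \<forall>i\<in>{..<n}. 0 \<le> X i \<omega>"
  proof (rule AE_finite_allI)
    fix i assume "i \<in> {..<n}"
    then interpret Ai: acrv M "X i" f by (intro acXi) auto
    show "AE \<omega> in M. 0 \<le> X i \<omega>" by (rule Ai.AEnn)
  qed simp
  then show ?thesis
  proof eventually_elim
    fix \<omega> assume nn: "\<forall>i\<in>{..<n}. 0 \<le> X i \<omega>"
    show "0 \<le> \<tau> \<omega>"
    proof (rule ccontr)
      assume neg: "\<not> 0 \<le> \<tau> \<omega>"
      have "card {i. i < n \<and> \<tau> \<omega> < X i \<omega>} < k"
        using kofn_le_iff[OF k, of X \<omega> "\<tau> \<omega>"] by simp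
      moreover have "{i. i < n \<and> \<tau> \<omega> < X i \<omega>} = {..<n}"
      proof -
        have "\<tau> \<omega> < X i \<omega>" if "i < n" for i
          using nn neg that by (meson lessThan_iff less_le_trans not_le)
        then show ?thesis by auto
      qed
      ultimately show False using k by simp
    qed
  qed
qed

lemma smono_tau: "strict_mono_on {0..} (rv_cdf M \<tau>)"
proof (rule strict_mono_onI)
  fix x y :: real assume xy: "x \<in> {0..}" "y \<in> {0..}" "x < y"
  have "F x < F y" using A0.smono xy unfolding strict_mono_on_def by auto
  then have "(1 - F y) ^ k * Kp k s (F y) < (1 - F x) ^ k * Kp k s (F x)"
    using A0.F_nonneg A0.F_le1 by (intro Sv_decr) auto
  then show "rv_cdf M \<tau> x < rv_cdf M \<tau> y" unfolding cdf_tau by simp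
qed

lemma ac_tau: "nonneg_ac_rv M \<tau> gd"
  unfolding nonneg_ac_rv_def distributed_def
  using distr_tau tau_meas gd_meas gd_nonneg AE_tau smono_tau by auto

lemma haz_tau:
  assumes x: "0 \<le> x"
  shows "hazard_rate M \<tau> gd x = hazard_rate M (X 0) f x * Hk k s (F x)"
proof -
  have u: "0 \<le> F x" "F x < 1" using A0.F_nonneg A0.F_lt1 by auto
  have K: "0 < Kp k s (F x)" using u by (intro Kp_pos)
  have pk: "(1 - F x) ^ k = (1 - F x) ^ (k - 1) * (1 - F x)" using k
    by (metis Suc_diff_le diff_Suc_1 power_Suc2)
  have p0: "0 < (1 - F x) ^ (k - 1)" using u by simp
  show ?thesis
    unfolding hazard_rate_def cdf_tau gd_def dphi_def Hk_def pk
    using K p0 u by (simp add: field_simps)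
qed

end

lemma div_alg: "(0::real) < K1 \<Longrightarrow> 0 < K2 \<Longrightarrow> 0 < cY \<Longrightarrow> 0 < b \<Longrightarrow> (cX * a / K1) / (cY * b / K2) = cX / cY * (a * K2 / (b * K1))"
  by (simp add: field_simps)

lemma Kp_0s: "Kp k 0 u = 1" by (simp add: Kp_def)

lemma Hk_nonneg: "0 \<le> u \<Longrightarrow> 0 \<le> Hk k s u"
  unfolding Hk_def using Kp_pos[of u k s] by simp

lemma ratio_le1:
  fixes FX FY :: "real \<Rightarrow> real"
  assumes mono: "mono_on {0<..} (\<lambda>x. FX x / FY x)"
    and limX: "(FX \<longlongrightarrow> 1) at_top" and limY: "(FY \<longlongrightarrow> 1) at_top"
    and pos: "0 < FY x" and x: "0 < x"
  shows "FX x \<le> FY x"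
proof (rule ccontr)
  assume "\<not> FX x \<le> FY x"
  then have r0: "1 < FX x / FY x" using pos by (simp add: field_simps)
  have lim: "((\<lambda>y. FX y / FY y) \<longlongrightarrow> 1 / 1) at_top"
    by (rule tendsto_divide[OF limX limY]) simp
  have ev: "eventually (\<lambda>y. FX x / FY x \<le> FX y / FY y) at_top"
    unfolding eventually_at_top_linorder using x by (intro exI[of _ x] allI impI mono_onD[OF mono]) auto
  have "FX x / FY x \<le> 1 / 1" by (rule tendsto_lowerbound[OF lim ev]) simp
  then show False using r0 by simp
qed

theorem corollary3p1:
  fixes M :: "'a measure" and N :: "'b measure"
    and X :: "nat \<Rightarrow> 'a \<Rightarrow> real" and Y :: "nat \<Rightarrow> 'b \<Rightarrow> real"
    and fX fY :: "real \<Rightarrow> real" and n m k l :: nat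
  assumes "prob_space M" and "prob_space N"
    and "prob_space.indep_vars M (\<lambda>_. borel) X {..<n}"
    and "\<forall>i<n. nonneg_ac_rv M (X i) fX"
    and "prob_space.indep_vars N (\<lambda>_. borel) Y {..<m}"
    and "\<forall>i<m. nonneg_ac_rv N (Y i) fY"
    and "c_order M (X 0) fX N (Y 0) fY"
    and "rhr_le N (Y 0) M (X 0)"
    and "1 \<le> k" and "k \<le> n" and "1 \<le> l" and "l \<le> m" and "k \<le> l"
    and "m - l \<le> n - k"
  shows "\<exists>g h. nonneg_ac_rv M (kofn_lifetime k n X) g \<and>
               nonneg_ac_rv N (kofn_lifetime l m Y) h \<and>
               c_order M (kofn_lifetime k n X) g N (kofn_lifetime l m Y) h"
proof -
  note as = assms
  interpret KX: kofn M X fX n k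
    by (rule kofn.intro) (rule as)+
  interpret KY: kofn N Y fY m l
    by (rule kofn.intro) (rule as)+
  define FX where "FX = rv_cdf M (X 0)"
  define FY where "FY = rv_cdf N (Y 0)"
  define s where "s = n - k"
  define t where "t = m - l"
  have ts: "t \<le> s" unfolding s_def t_def using as by simp
  have kl: "1 \<le> k" "k \<le> l" using as by auto
  define R where "R x = hazard_rate M (X 0) fX x / hazard_rate N (Y 0) fY x" for x
  define V where "V x = Hk k s (FX x) / Hk l t (FY x)" for x
  have R_mono: "mono_on {0..} R" using as(7) unfolding c_order_def R_def .
  have R_nonneg: "0 \<le> R x" for x
  proof -
    have "0 \<le> hazard_rate M (X 0) fX x" unfolding hazard_rate_def
      using KX.A0.fnn[of x] KX.A0.F_le1[of x] by simp
    moreover have "0 \<le> hazard_rate N (Y 0) fY x" unfolding hazard_rate_def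
      using KY.A0.fnn[of x] KY.A0.F_le1[of x] by simp
    ultimately show ?thesis unfolding R_def by simp
  qed
  have V_nonneg: "0 \<le> V x" for x
    unfolding V_def FX_def FY_def using KX.A0.F_nonneg KY.A0.F_nonneg
    by (intro divide_nonneg_nonneg Hk_nonneg) auto
  have rho: "FX x \<le> FY x" if "0 < x" for x
  proof (rule ratio_le1[where FX = FX and FY = FY])
    show "mono_on {0<..} (\<lambda>x. FX x / FY x)" using as(8) unfolding rhr_le_def FX_def FY_def .
    show "(FX \<longlongrightarrow> 1) at_top" unfolding FX_def by (rule KX.A0.F_lim)
    show "(FY \<longlongrightarrow> 1) at_top" unfolding FY_def by (rule KY.A0.F_lim)
    show "0 < FY x" unfolding FY_def using that by (rule KY.A0.F_pos)
  qed (rule that)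
  have V_mono: "mono_on {0..} V"
  proof (rule mono_onI)
    fix x y :: real assume x: "x \<in> {0..}" and y: "y \<in> {0..}" and xy: "x \<le> y"
    show "V x \<le> V y"
    proof (cases "s = 0")
      case True
      then have "t = 0" using ts by simp
      then show ?thesis using True unfolding V_def Hk_def by (simp add: Kp_0s)
    next
      case False
      show ?thesis
      proof (cases "x = 0")
        case True
        have "FX x = 0" unfolding FX_def True using KX.A0.F_0 .
        then have "V x = 0" unfolding V_def Hk_def using False by simp
        then show ?thesis using V_nonneg[of y] by simp
      next
        case x0: False
        then have xpos: "0 < x" using x by simp
        then have ypos: "0 < y" using xy by simp
        have pX: "0 < FX x" "0 < FX y" unfolding FX_def using xpos ypos by (auto intro: KX.A0.F_pos)
        have pY: "0 < FY x" "0 < FY y" unfolding FY_def using xpos ypos by (auto intro: KY.A0.F_pos)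
        define cX where "cX = real (k + s) * real ((k - 1 + s) choose s)"
        define cY where "cY = real (l + t) * real ((l - 1 + t) choose t)"
        have cpos: "0 < cX" "0 < cY" unfolding cX_def cY_def using kl by auto
        have Vid: "V z = cX / cY * Wf k s l t (FX z) (FY z)" if "0 < FX z" "0 < FY z" for z
        proof -
          have K: "0 < Kp k s (FX z)" "0 < Kp l t (FY z)" using that by (auto intro: Kp_pos)
          have b: "0 < FY z ^ t" using that by simp
          show ?thesis unfolding V_def Hk_def Wf_def cX_def[symmetric] cY_def[symmetric]
            by (rule div_alg[OF K(1) K(2) cpos(2) b])
        qed
        have "Wf k s l t (FX x) (FY x) \<le> Wf k s l t (FX y) (FY y)"
        proof (rule W_mono[OF kl ts])
          show "0 < FX x" by (rule pX(1))
          show "FX x \<le> FY x" by (rule rho[OF xpos])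
          show "FY x \<le> FY y" unfolding FY_def using xy by (rule KY.A0.F_mono)
          show "0 < FX y" by (rule pX(2))
          show "FX x / FY x \<le> FX y / FY y"
            unfolding FX_def FY_def
            by (rule mono_onD[OF as(8)[unfolded rhr_le_def]]) (use xpos ypos xy in auto)
        qed
        then show ?thesis unfolding Vid[OF pX(1) pY(1)] Vid[OF pX(2) pY(2)]
          using cpos by (intro mult_left_mono) auto
      qed
    qed
  qed
  have haz: "hazard_rate M (kofn_lifetime k n X) KX.gd x / hazard_rate N (kofn_lifetime l m Y) KY.gd x = R x * V x"
    if "0 \<le> x" for x
    unfolding KX.haz_tau[OF that] KY.haz_tau[OF that] R_def V_def FX_def FY_def s_def t_def
    by (rule times_divide_times_eq[symmetric])
  have "c_order M (kofn_lifetime k n X) KX.gd N (kofn_lifetime l m Y) KY.gd"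
    unfolding c_order_def
  proof (rule mono_onI)
    fix x y :: real assume x: "x \<in> {0..}" and y: "y \<in> {0..}" and xy: "x \<le> y"
    have "R x * V x \<le> R y * V y"
      using mono_onD[OF R_mono x y xy] mono_onD[OF V_mono x y xy] R_nonneg V_nonneg
      by (intro mult_mono) auto
    then show "hazard_rate M (kofn_lifetime k n X) KX.gd x / hazard_rate N (kofn_lifetime l m Y) KY.gd x
        \<le> hazard_rate M (kofn_lifetime k n X) KX.gd y / hazard_rate N (kofn_lifetime l m Y) KY.gd y"
      using haz x y by simp
  qed
  then show ?thesis using KX.ac_tau KY.ac_tau by blast
qed

end
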